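(* Let $G$ be a finite simple graph. If $x$ is a maximum cost construction sequence for $G$ (i.e. $\nu(x)=\nu^*(G)$), then $x$ is easy.
   Context: For a finite simple graph $G=(V,E)$ with $\ell=|V|+|E|$, a construction sequence (c-sequence) is a bijection $x:\{1,\dots,\ell\}\to V\sqcup E$ such that every edge $e=uw$ satisfies $x^{-1}(e)>\max\{x^{-1}(u),x^{-1}(w)\}$. The cost of $x$ is $\nu(x)=\sum_{e=uw\in E}\big(2x^{-1}(e)-x^{-1}(u)-x^{-1}(w)\big)$, and $\nu^*(G)$ is the maximum of $\nu(x)$ over all c-sequences for $G$. A c-sequence is easy if no edge precedes a vertex. *)

theory Defs
  imports Main
begin

definition simple_graph :: "'a set \<Rightarrow> 'a set set \<Rightarrow> bool" where
  "simple_graph V E \<longleftrightarrow> finite V \<and>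
     (\<forall>e\<in>E. \<exists>u w. e = {u, w} \<and> u \<noteq> w \<and> u \<in> V \<and> w \<in> V)"

definition elems :: "'a set \<Rightarrow> 'a set set \<Rightarrow> ('a + 'a set) set" where
  "elems V E = Inl ` V \<union> Inr ` E"

definition len :: "'a set \<Rightarrow> 'a set set \<Rightarrow> nat" where
  "len V E = card V + card E"

definition pos :: "'a set \<Rightarrow> 'a set set \<Rightarrow> (nat \<Rightarrow> 'a + 'a set) \<Rightarrow> ('a + 'a set) \<Rightarrow> nat" where
  "pos V E x a = inv_into {1..len V E} x a"

definition cseq :: "'a set \<Rightarrow> 'a set set \<Rightarrow> (nat \<Rightarrow> 'a + 'a set) \<Rightarrow> bool" where
  "cseq V E x \<longleftrightarrow> bij_betw x {1..len V E} (elems V E) \<and>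
     (\<forall>e\<in>E. \<forall>u\<in>e. pos V E x (Inl u) < pos V E x (Inr e))"

definition cost :: "'a set \<Rightarrow> 'a set set \<Rightarrow> (nat \<Rightarrow> 'a + 'a set) \<Rightarrow> int" where
  "cost V E x = (\<Sum>e\<in>E. 2 * int (pos V E x (Inr e)) - (\<Sum>u\<in>e. int (pos V E x (Inl u))))"

definition max_cost :: "'a set \<Rightarrow> 'a set set \<Rightarrow> int" where
  "max_cost V E = Max (cost V E ` {x. cseq V E x})"

definition easy :: "'a set \<Rightarrow> 'a set set \<Rightarrow> (nat \<Rightarrow> 'a + 'a set) \<Rightarrow> bool" where
  "easy V E x \<longleftrightarrow> (\<forall>v\<in>V. \<forall>e\<in>E. pos V E x (Inl v) < pos V E x (Inr e))"

end

theory Submission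
  imports Defs
begin

lemma pos_props:
  assumes "bij_betw x {1..len V E} (elems V E)" "a \<in> elems V E"
  shows "pos V E x a \<in> {1..len V E}" "x (pos V E x a) = a"
proof -
  have "a \<in> x ` {1..len V E}" using assms by (simp add: bij_betw_def)
  then show "pos V E x a \<in> {1..len V E}" "x (pos V E x a) = a"
    unfolding pos_def by (rule inv_into_into, rule f_inv_into_f)
qed

lemma pos_le:
  assumes "bij_betw x {1..len V E} (elems V E)" "a \<in> elems V E"
  shows "pos V E x a \<le> len V E"
  using pos_props(1)[OF assms] by auto

lemma cost_bounded:
  assumes sg: "simple_graph V E" and c: "cseq V E x"
  shows "\<bar>cost V E x\<bar> \<le> int (card E * (4 * len V E))"
proof -
  have bij: "bij_betw x {1..len V E} (elems V E)" using c by (simp add: cseq_def)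
  have "\<bar>cost V E x\<bar> \<le> (\<Sum>e\<in>E. \<bar>2 * int (pos V E x (Inr e)) - (\<Sum>u\<in>e. int (pos V E x (Inl u)))\<bar>)"
    unfolding cost_def by (rule sum_abs)
  also have "\<dots> \<le> (\<Sum>e\<in>E. int (4 * len V E))"
  proof (rule sum_mono)
    fix e assume e: "e \<in> E"
    then obtain u w where uw: "e = {u, w}" "u \<noteq> w" "u \<in> V" "w \<in> V"
      using sg unfolding simple_graph_def by blast
    have pe: "pos V E x (Inr e) \<le> len V E"
      by (rule pos_le[OF bij]) (use e in \<open>simp add: elems_def\<close>)
    have pu: "pos V E x (Inl u) \<le> len V E" "pos V E x (Inl w) \<le> len V E"
      by (rule pos_le[OF bij], use uw in \<open>simp add: elems_def\<close>)+
    show "\<bar>2 * int (pos V E x (Inr e)) - (\<Sum>u\<in>e. int (pos V E x (Inl u)))\<bar> \<le> int (4 * len V E)"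
      using pe pu uw by simp
  qed
  also have "\<dots> = int (card E * (4 * len V E))" by simp
  finally show ?thesis .
qed

lemma finite_costs:
  assumes sg: "simple_graph V E"
  shows "finite (cost V E ` {x. cseq V E x})"
proof -
  let ?B = "int (card E * (4 * len V E))"
  have "cost V E ` {x. cseq V E x} \<subseteq> {-?B..?B}"
  proof
    fix c assume "c \<in> cost V E ` {x. cseq V E x}"
    then obtain x where cx: "cseq V E x" and cc: "c = cost V E x" by auto
    have "\<bar>c\<bar> \<le> ?B" using cost_bounded[OF sg cx] cc by simp
    then show "c \<in> {-?B..?B}" unfolding atLeastAtMost_iff abs_le_iff by linarith
  qed
  then show ?thesis by (rule finite_subset) simp
qed

theorem lemma2:
  fixes V :: "'a set" and E :: "'a set set" and x :: "nat \<Rightarrow> 'a + 'a set"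
  assumes "simple_graph V E"
    and "cseq V E x"
    and "cost V E x = max_cost V E"
  shows "easy V E x"
proof (rule ccontr)
  assume "\<not> easy V E x"
  then obtain v e where v: "v \<in> V" and e: "e \<in> E"
    and lt: "\<not> pos V E x (Inl v) < pos V E x (Inr e)"
    unfolding easy_def by blast
  let ?A = "{1..len V E}"
  have bij: "bij_betw x ?A (elems V E)" and ord: "\<forall>e\<in>E. \<forall>u\<in>e. pos V E x (Inl u) < pos V E x (Inr e)"
    using assms(2) by (auto simp: cseq_def)
  have inj: "inj_on x ?A" and img: "x ` ?A = elems V E" using bij by (auto simp: bij_betw_def)
  have finE: "finite E"
  proof -
    have "E \<subseteq> Pow V"
    proof
      fix f assume "f \<in> E"
      then obtain u w where "f = {u, w}" "u \<in> V" "w \<in> V"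
        using assms(1) unfolding simple_graph_def by meson
      then show "f \<in> Pow V" by simp
    qed
    moreover have "finite (Pow V)" using assms(1) unfolding simple_graph_def by simp
    ultimately show ?thesis by (rule finite_subset)
  qed
  define p where "p = pos V E x (Inr e)"
  define q where "q = pos V E x (Inl v)"
  have vel: "Inl v \<in> elems V E" "Inr e \<in> elems V E" using v e by (auto simp: elems_def)
  have pA: "p \<in> ?A" and xp: "x p = Inr e" using pos_props[OF bij vel(2)] p_def by auto
  have qA: "q \<in> ?A" and xq: "x q = Inl v" using pos_props[OF bij vel(1)] q_def by auto
  have pq: "p \<noteq> q" using xp xq by auto
  with lt have plq: "p < q" unfolding p_def q_def by simp
  have vne: "v \<notin> e"
  proof
    assume "v \<in> e"
    then have "q < p" using ord e unfolding p_def q_def by blast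
    then show False using plq by simp
  qed
  define y where "y = (\<lambda>j. if j = p then x q else if j = q then x p else x j)"
  have injy: "inj_on y ?A"
  proof (rule inj_onI)
    fix i j assume i: "i \<in> ?A" and j: "j \<in> ?A" and eq: "y i = y j"
    have xi: "\<And>a b. a \<in> ?A \<Longrightarrow> b \<in> ?A \<Longrightarrow> x a = x b \<Longrightarrow> a = b"
      using inj inj_onD by metis
    show "i = j"
      using eq i j pA qA pq unfolding y_def
      by (cases "i = p"; cases "i = q"; cases "j = p"; cases "j = q"; simp; metis xi)
  qed
  have imgy: "y ` ?A = elems V E"
  proof
    show "y ` ?A \<subseteq> elems V E" using img pA qA unfolding y_def by auto
    show "elems V E \<subseteq> y ` ?A"
    proof
      fix a assume a: "a \<in> elems V E"
      have "a \<in> x ` ?A" using a img by simp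
      then obtain j where j: "j \<in> ?A" "x j = a" by blast
      show "a \<in> y ` ?A"
      proof (cases "j = p")
        case True then show ?thesis using qA j unfolding y_def by (intro image_eqI[of _ _ q]) (auto simp: pq[symmetric])
      next
        case False
        show ?thesis
        proof (cases "j = q")
          case True then show ?thesis using pA j unfolding y_def by (intro image_eqI[of _ _ p]) auto
        next
          case False then show ?thesis using \<open>j \<noteq> p\<close> j unfolding y_def by (intro image_eqI[of _ _ j]) auto
        qed
      qed
    qed
  qed
  have bijy: "bij_betw y ?A (elems V E)" using injy imgy by (simp add: bij_betw_def)
  have posy: "pos V E y a = (if a = Inl v then p else if a = Inr e then q else pos V E x a)"
    if a: "a \<in> elems V E" for a
  proof -
    have "pos V E y a = inv_into ?A y a" by (simp add: pos_def)
    show ?thesis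
    proof (cases "a = Inl v")
      case True
      have "inv_into ?A y a = p" by (rule inv_into_f_eq[OF injy pA]) (simp add: y_def True xq)
      then show ?thesis using True by (simp add: pos_def)
    next
      case nv: False
      show ?thesis
      proof (cases "a = Inr e")
        case True
        have "inv_into ?A y a = q" by (rule inv_into_f_eq[OF injy qA]) (use pq in \<open>simp add: y_def True xp\<close>)
        then show ?thesis using True by (simp add: pos_def)
      next
        case False
        have j: "pos V E x a \<in> ?A" "x (pos V E x a) = a" using pos_props[OF bij a] by auto
        have "pos V E x a \<noteq> p" "pos V E x a \<noteq> q" using j(2) xp xq nv False by auto
        then have "inv_into ?A y a = pos V E x a"
          by (intro inv_into_f_eq[OF injy j(1)]) (simp add: y_def j(2))
        then show ?thesis using nv False by (simp add: pos_def)
      qed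
    qed
  qed
  have vle: "pos V E y (Inl u) \<le> pos V E x (Inl u)" if "u \<in> V" for u
  proof -
    have "Inl u \<in> elems V E" using that by (simp add: elems_def)
    then show ?thesis using posy plq q_def by auto
  qed
  have vlt: "pos V E y (Inl v) < pos V E x (Inl v)" using posy[OF vel(1)] plq q_def by simp
  have ege: "pos V E x (Inr f) \<le> pos V E y (Inr f)" if "f \<in> E" for f
  proof -
    have "Inr f \<in> elems V E" using that by (simp add: elems_def)
    then show ?thesis using posy plq p_def by auto
  qed
  have egt: "pos V E x (Inr e) < pos V E y (Inr e)" using posy[OF vel(2)] plq p_def by simp
  have edgeV: "f \<subseteq> V" if fE: "f \<in> E" for f
  proof -
    obtain u w where "f = {u, w}" "u \<in> V" "w \<in> V"
      using assms(1) fE unfolding simple_graph_def by meson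
    then show ?thesis by simp
  qed
  have cy: "cseq V E y"
    unfolding cseq_def
  proof (intro conjI ballI bijy)
    fix f u assume f: "f \<in> E" and u: "u \<in> f"
    have "pos V E y (Inl u) \<le> pos V E x (Inl u)" using vle edgeV f u by blast
    also have "\<dots> < pos V E x (Inr f)" using ord f u by blast
    also have "\<dots> \<le> pos V E y (Inr f)" using ege f by blast
    finally show "pos V E y (Inl u) < pos V E y (Inr f)" .
  qed
  have "cost V E x < cost V E y"
    unfolding cost_def
  proof (rule sum_strict_mono_ex1[OF finE])
    show "\<forall>f\<in>E. 2 * int (pos V E x (Inr f)) - (\<Sum>u\<in>f. int (pos V E x (Inl u)))
        \<le> 2 * int (pos V E y (Inr f)) - (\<Sum>u\<in>f. int (pos V E y (Inl u)))"
    proof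
      fix f assume f: "f \<in> E"
      have "(\<Sum>u\<in>f. int (pos V E y (Inl u))) \<le> (\<Sum>u\<in>f. int (pos V E x (Inl u)))"
        by (rule sum_mono) (use vle edgeV f in auto)
      then show "2 * int (pos V E x (Inr f)) - (\<Sum>u\<in>f. int (pos V E x (Inl u)))
        \<le> 2 * int (pos V E y (Inr f)) - (\<Sum>u\<in>f. int (pos V E y (Inl u)))"
        using ege[OF f] by linarith
    qed
    have "(\<Sum>u\<in>e. int (pos V E y (Inl u))) \<le> (\<Sum>u\<in>e. int (pos V E x (Inl u)))"
      by (rule sum_mono) (use vle edgeV e in auto)
    then show "\<exists>f\<in>E. 2 * int (pos V E x (Inr f)) - (\<Sum>u\<in>f. int (pos V E x (Inl u)))
        < 2 * int (pos V E y (Inr f)) - (\<Sum>u\<in>f. int (pos V E y (Inl u)))"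
      using egt e by (intro bexI[of _ e]) linarith+
  qed
  moreover have "cost V E y \<le> max_cost V E"
    unfolding max_cost_def using cy finite_costs[OF assms(1)] by (intro Max_ge) auto
  ultimately show False using assms(3) by simp
qed

end
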